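(* Let $H\ge2$ be fixed and assume the ranking mechanism is consistent. (i) If $K_n\xrightarrow{w}e$, then $\mathbb E(F_{n;jps}(t))\to F(t)$ as $n\to\infty$ for every continuity point $t$ of $F$. (ii) Conversely, if for every population CDF $F$ (with any consistent ranking mechanism) one has $\mathbb E(F_{n;jps}(t))\to F(t)$ as $n\to\infty$ at every continuity point $t$ of $F$, then $K_n\xrightarrow{w}e$. Thus estimators of the form $F_{n;jps}$ are asymptotically unbiased if and only if $K_n\xrightarrow{w}e$.
   Context: Setting (judgment post stratification, JPS). Fix an integer set size $H\ge 2$ and a sample size $n\ge 1$. A JPS sample is a collection of $n$ i.i.d. pairs $(X_1,R_1),\dots,(X_n,R_n)$, where $R_i\in\{1,\dots,H\}$ with $P(R_i=r)=1/H$ for each $r$, and conditionally on $R_i=r$ the real random variable $X_i$ has CDF $F_{[r]}$. Let $F$ be the population CDF. The ranking mechanism is called consistent if $F(t)=\frac1H\sum_{r=1}^H F_{[r]}(t)$ for all $t\in\mathbb R$. Define $I_{ir}=\mathbb I(R_i=r)$, $N_r=\sum_{i=1}^n I_{ir}$, $d_n=\sum_{r=1}^H\mathbb I(N_r>0)$, and $W_r=\mathbb I(N_r>0)/d_n$. Given a sequence of CDFs $(K_n)_{n\ge1}$ on $\mathbb R$, define $F_{n;[r]}(t)=\frac1{N_r}\sum_{i=1}^n K_n(t-X_i)I_{ir}$ if $N_r>0$ and $F_{n;[r]}(t)=0$ otherwise, and $F_{n;jps}(t)=\sum_{r=1}^H W_rF_{n;[r]}(t)$. Let $e(t)=\mathbb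 I(t\ge0)$. For CDFs $G_n,G$, $G_n\xrightarrow{w}G$ means $G_n(t)\to G(t)$ as $n\to\infty$ for every continuity point $t$ of $G$. *)

theory Defs
  imports "HOL-Probability.Probability"
begin

definition is_cdf :: "(real \<Rightarrow> real) \<Rightarrow> bool" where
  "is_cdf G \<longleftrightarrow> (\<exists>M. real_distribution M \<and> cdf M = G)"

definition e_cdf :: "real \<Rightarrow> real" where
  "e_cdf t = (if t \<ge> 0 then 1 else 0)"

text \<open>Law of a single JPS pair (X,R): R uniform on {1..H}, and given R = r,
  X has distribution M r (whose CDF is F_[r]).\<close>
definition jps_law :: "nat \<Rightarrow> (nat \<Rightarrow> real measure) \<Rightarrow> (real \<times> nat) measure" where
  "jps_law H M = uniform_count_measure {1..H} \<bind>
      (\<lambda>r. distr (M r) (borel \<Otimes>\<^sub>M count_space UNIV) (\<lambda>x. (x, r)))"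

text \<open>Joint law of the JPS sample (X_1,R_1),...,(X_n,R_n) (indices 0..n-1), i.i.d.\<close>
definition jps_sample :: "nat \<Rightarrow> (nat \<Rightarrow> real measure) \<Rightarrow> nat \<Rightarrow> (nat \<Rightarrow> real \<times> nat) measure" where
  "jps_sample H M n = PiM {..<n} (\<lambda>_. jps_law H M)"

definition jps_N :: "nat \<Rightarrow> (nat \<Rightarrow> real \<times> nat) \<Rightarrow> nat \<Rightarrow> nat" where
  "jps_N n \<omega> r = card {i \<in> {..<n}. snd (\<omega> i) = r}"

definition jps_d :: "nat \<Rightarrow> nat \<Rightarrow> (nat \<Rightarrow> real \<times> nat) \<Rightarrow> nat" where
  "jps_d H n \<omega> = card {r \<in> {1..H}. jps_N n \<omega> r > 0}"

definition jps_W :: "nat \<Rightarrow> nat \<Rightarrow> (nat \<Rightarrow> real \<times> nat) \<Rightarrow> nat \<Rightarrow> real" where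
  "jps_W H n \<omega> r = (if jps_N n \<omega> r > 0 then 1 else 0) / real (jps_d H n \<omega>)"

definition jps_Fr :: "(real \<Rightarrow> real) \<Rightarrow> nat \<Rightarrow> (nat \<Rightarrow> real \<times> nat) \<Rightarrow> nat \<Rightarrow> real \<Rightarrow> real" where
  "jps_Fr Kn n \<omega> r t =
     (if jps_N n \<omega> r > 0
      then (\<Sum>i\<in>{..<n}. Kn (t - fst (\<omega> i)) * (if snd (\<omega> i) = r then 1 else 0)) / real (jps_N n \<omega> r)
      else 0)"

definition jps_est :: "nat \<Rightarrow> (real \<Rightarrow> real) \<Rightarrow> nat \<Rightarrow> (nat \<Rightarrow> real \<times> nat) \<Rightarrow> real \<Rightarrow> real" where
  "jps_est H Kn n \<omega> t = (\<Sum>r\<in>{1..H}. jps_W H n \<omega> r * jps_Fr Kn n \<omega> r t)"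

definition jps_mean :: "nat \<Rightarrow> (nat \<Rightarrow> real measure) \<Rightarrow> (nat \<Rightarrow> real \<Rightarrow> real) \<Rightarrow> nat \<Rightarrow> real \<Rightarrow> real" where
  "jps_mean H M K n t = integral\<^sup>L (jps_sample H M n) (\<lambda>\<omega>. jps_est H (K n) n \<omega> t)"

end

theory Submission
  imports Defs
begin

lemma Q_basic:
  assumes H: "H \<ge> 1" and M: "\<forall>r\<in>{1..H}. real_distribution (M r)"
  shows "prob_space (jps_law H M)" and "sets (jps_law H M) = sets (borel \<Otimes>\<^sub>M count_space UNIV)"
proof -
  let ?U = "uniform_count_measure {1..H}"
  have U: "?U \<in> space (prob_algebra ?U)"
    using H by (auto simp: space_prob_algebra intro!: prob_space_uniform_count_measure)
  have B: "(\<lambda>r. distr (M r) (borel \<Otimes>\<^sub>M count_space UNIV) (\<lambda>x. (x, r))) \<in> ?U \<rightarrow>\<^sub>M prob_algebra (borel \<Otimes>\<^sub>M count_space UNIV)"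
  proof -
    have "(\<lambda>r. distr (M r) (borel \<Otimes>\<^sub>M count_space UNIV) (\<lambda>x. (x, r))) \<in> count_space {1..H} \<rightarrow>\<^sub>M prob_algebra (borel \<Otimes>\<^sub>M count_space UNIV)"
    proof (subst measurable_count_space_eq1, rule Pi_I)
      fix r assume r: "r \<in> {1..H}"
      then interpret real_distribution "M r" using M by auto
      have m: "(\<lambda>x. (x, r)) \<in> M r \<rightarrow>\<^sub>M borel \<Otimes>\<^sub>M count_space UNIV"
        by measurable
      show "distr (M r) (borel \<Otimes>\<^sub>M count_space UNIV) (\<lambda>x. (x, r)) \<in> space (prob_algebra (borel \<Otimes>\<^sub>M count_space UNIV))"
        using m by (auto simp: space_prob_algebra intro!: prob_space_distr)
    qed
    then show ?thesis
      by (subst measurable_cong_sets[OF sets_uniform_count_measure_count_space refl])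
  qed
  show "prob_space (jps_law H M)" unfolding jps_law_def by (rule prob_space_bind'[OF U B])
  show "sets (jps_law H M) = sets (borel \<Otimes>\<^sub>M count_space UNIV)" unfolding jps_law_def by (rule sets_bind'[OF U B])
qed


lemma Q_kernel:
  assumes H: "H \<ge> 1" and M: "\<forall>r\<in>{1..H}. real_distribution (M r)"
  shows "(\<lambda>r. distr (M r) (borel \<Otimes>\<^sub>M count_space UNIV) (\<lambda>x. (x, r))) \<in> uniform_count_measure {1..H} \<rightarrow>\<^sub>M prob_algebra (borel \<Otimes>\<^sub>M count_space UNIV)"
proof -
    have "(\<lambda>r. distr (M r) (borel \<Otimes>\<^sub>M count_space UNIV) (\<lambda>x. (x, r))) \<in> count_space {1..H} \<rightarrow>\<^sub>M prob_algebra (borel \<Otimes>\<^sub>M count_space UNIV)"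
    proof (subst measurable_count_space_eq1, rule Pi_I)
      fix r assume r: "r \<in> {1..H}"
      then interpret real_distribution "M r" using M by auto
      have m: "(\<lambda>x. (x, r)) \<in> M r \<rightarrow>\<^sub>M borel \<Otimes>\<^sub>M count_space UNIV"
        by measurable
      show "distr (M r) (borel \<Otimes>\<^sub>M count_space UNIV) (\<lambda>x. (x, r)) \<in> space (prob_algebra (borel \<Otimes>\<^sub>M count_space UNIV))"
        using m by (auto simp: space_prob_algebra intro!: prob_space_distr)
    qed
    then show ?thesis
      by (subst measurable_cong_sets[OF sets_uniform_count_measure_count_space refl])
qed

lemma Q_int:
  fixes h :: "real \<Rightarrow> real"
  assumes H: "H \<ge> 1" and M: "\<forall>r\<in>{1..H}. real_distribution (M r)" and r: "r \<in> {1..H}"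
    and hm: "h \<in> borel_measurable borel" and h0: "\<And>x. 0 \<le> h x" and h1: "\<And>x. h x \<le> 1"
  shows "(\<integral>y. h (fst y) * (if snd y = r then 1 else 0) \<partial>jps_law H M) = (\<integral>x. h x \<partial>M r) / real H"
proof -
  interpret Mr: real_distribution "M r" using M r by auto
  let ?B = "borel \<Otimes>\<^sub>M count_space UNIV :: (real \<times> nat) measure"
  let ?f = "\<lambda>y::real\<times>nat. h (fst y) * (if snd y = r then 1 else 0)"
  have fm: "?f \<in> borel_measurable ?B" using hm by measurable
  have K: "(\<lambda>r. distr (M r) ?B (\<lambda>x. (x, r))) \<in> uniform_count_measure {1..H} \<rightarrow>\<^sub>M subprob_algebra ?B"
    using Q_kernel[OF H M] by (rule measurable_prob_algebraD)
  have sQ: "sets (jps_law H M) = sets ?B" by (rule Q_basic(2)[OF H M])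
  interpret Q: prob_space "jps_law H M" by (rule Q_basic(1)[OF H M])
  have fmQ: "?f \<in> borel_measurable (jps_law H M)" using fm measurable_cong_sets[OF sQ refl] by blast
  have "(\<integral>\<^sup>+y. ennreal (?f y) \<partial>jps_law H M)
      = (\<integral>\<^sup>+s. \<integral>\<^sup>+y. ennreal (?f y) \<partial>distr (M s) ?B (\<lambda>x. (x, s)) \<partial>uniform_count_measure {1..H})"
    unfolding jps_law_def using fm K by (intro nn_integral_bind) auto
  also have "\<dots> = (\<integral>\<^sup>+s. (if s = r then (\<integral>\<^sup>+x. ennreal (h x) \<partial>M r) else 0) \<partial>uniform_count_measure {1..H})"
  proof (rule nn_integral_cong)
    fix s assume s: "s \<in> space (uniform_count_measure {1..H})"
    then interpret Ms: real_distribution "M s" using M by (auto simp: space_uniform_count_measure)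
    have m: "(\<lambda>x. (x, s)) \<in> M s \<rightarrow>\<^sub>M ?B" by measurable
    show "(\<integral>\<^sup>+y. ennreal (?f y) \<partial>distr (M s) ?B (\<lambda>x. (x, s))) = (if s = r then (\<integral>\<^sup>+x. ennreal (h x) \<partial>M r) else 0)"
      by (subst nn_integral_distr[OF m]) (use fm in auto)
  qed
  also have "\<dots> = ennreal (1 / real H) * (\<integral>\<^sup>+x. ennreal (h x) \<partial>M r)"
    unfolding uniform_count_measure_def using r
    by (subst nn_integral_point_measure_finite) (auto simp: if_distrib sum.delta cong: if_cong)
  also have "(\<integral>\<^sup>+x. ennreal (h x) \<partial>M r) = ennreal (\<integral>x. h x \<partial>M r)"
    using h0 h1 hm by (intro nn_integral_eq_integral Mr.integrable_const_bound[where B=1]) auto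
  finally have eq: "(\<integral>\<^sup>+y. ennreal (?f y) \<partial>jps_law H M) = ennreal ((\<integral>x. h x \<partial>M r) / real H)"
    using h0 by (simp add: ennreal_mult'[symmetric] integral_nonneg)
  have "(\<integral>y. ?f y \<partial>jps_law H M) = enn2real (\<integral>\<^sup>+y. ennreal (?f y) \<partial>jps_law H M)"
    using fmQ h0 by (intro integral_eq_nn_integral) auto
  also have "\<dots> = (\<integral>x. h x \<partial>M r) / real H" unfolding eq
    using h0 by (intro enn2real_ennreal) (auto intro!: divide_nonneg_nonneg integral_nonneg)
  finally show ?thesis .
qed


lemma S_basic:
  assumes H: "H \<ge> 1" and M: "\<forall>r\<in>{1..H}. real_distribution (M r)"
  shows "prob_space (jps_sample H M n)" "product_sigma_finite (\<lambda>_. jps_law H M)"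
proof -
  interpret Q: prob_space "jps_law H M" by (rule Q_basic(1)[OF H M])
  show "prob_space (jps_sample H M n)" unfolding jps_sample_def
    by (rule prob_space_PiM) (rule Q.prob_space_axioms)
  show "product_sigma_finite (\<lambda>_. jps_law H M)"
    by unfold_locales
qed

lemma key_split:
  fixes h :: "real \<Rightarrow> real" and a :: "(nat \<Rightarrow> real \<times> nat) \<Rightarrow> real"
  assumes H: "H \<ge> 1" and M: "\<forall>r\<in>{1..H}. real_distribution (M r)" and r: "r \<in> {1..H}"
    and i: "i < n"
    and am: "a \<in> borel_measurable (jps_sample H M n)" and aB: "\<And>\<omega>. \<bar>a \<omega>\<bar> \<le> B"
    and aupd: "\<And>\<omega> x x' s. a (fun_upd \<omega> i (x, s)) = a (fun_upd \<omega> i (x', s))"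
    and hm: "h \<in> borel_measurable borel" and h0: "\<And>x. 0 \<le> h x" and h1: "\<And>x. h x \<le> 1"
  shows "(\<integral>\<omega>. a \<omega> * (h (fst (\<omega> i)) * (if snd (\<omega> i) = r then 1 else 0)) \<partial>jps_sample H M n)
       = (\<integral>x. h x \<partial>M r) * (\<integral>\<omega>. a \<omega> * (if snd (\<omega> i) = r then 1 else 0) \<partial>jps_sample H M n)"
proof -
  let ?Q = "jps_law H M"
  let ?B = "borel \<Otimes>\<^sub>M count_space UNIV :: (real \<times> nat) measure"
  interpret P: product_sigma_finite "\<lambda>_. ?Q" by (rule S_basic(2)[OF H M])
  interpret S: prob_space "jps_sample H M n" by (rule S_basic(1)[OF H M])
  interpret Q: prob_space ?Q by (rule Q_basic(1)[OF H M])
  interpret Mr: real_distribution "M r" using M r by auto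
  have sQ: "sets ?Q = sets ?B" by (rule Q_basic(2)[OF H M])
  define I' where "I' = {..<n} - {i}"
  have nI: "{..<n} = insert i I'" "finite I'" "i \<notin> I'" using i by (auto simp: I'_def)
  have Sdef: "jps_sample H M n = PiM (insert i I') (\<lambda>_. ?Q)" unfolding jps_sample_def nI(1) ..
  have sndm: "(\<lambda>\<omega>. snd (\<omega> i)) \<in> jps_sample H M n \<rightarrow>\<^sub>M count_space UNIV"
    unfolding jps_sample_def
  proof (rule measurable_compose[of "\<lambda>\<omega>. \<omega> i" _ ?Q])
    show "(\<lambda>\<omega>. \<omega> i) \<in> PiM {..<n} (\<lambda>_. ?Q) \<rightarrow>\<^sub>M ?Q" using i by simp
    show "snd \<in> ?Q \<rightarrow>\<^sub>M count_space UNIV" using measurable_snd[of borel "count_space UNIV"]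
      by (simp add: measurable_cong_sets[OF sQ refl])
  qed
  have fstm: "(\<lambda>\<omega>. fst (\<omega> i)) \<in> borel_measurable (jps_sample H M n)"
    unfolding jps_sample_def
  proof (rule measurable_compose[of "\<lambda>\<omega>. \<omega> i" _ ?Q])
    show "(\<lambda>\<omega>. \<omega> i) \<in> PiM {..<n} (\<lambda>_. ?Q) \<rightarrow>\<^sub>M ?Q" using i by simp
    show "fst \<in> ?Q \<rightarrow>\<^sub>M borel" using measurable_fst[of borel "count_space UNIV"]
      by (simp add: measurable_cong_sets[OF sQ refl])
  qed
  have ind: "\<And>\<omega>. \<bar>(if snd (\<omega> i) = r then 1 else 0::real)\<bar> \<le> 1" by auto
  let ?f = "\<lambda>\<omega>. a \<omega> * (h (fst (\<omega> i)) * (if snd (\<omega> i) = r then 1 else 0))"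
  let ?g = "\<lambda>\<omega>. a \<omega> * (if snd (\<omega> i) = r then 1 else 0)"
  have indm: "(\<lambda>\<omega>. if snd (\<omega> i) = r then 1 else 0::real) \<in> borel_measurable (jps_sample H M n)"
    by (rule measurable_compose[OF sndm]) simp
  have hfm: "(\<lambda>\<omega>. h (fst (\<omega> i))) \<in> borel_measurable (jps_sample H M n)"
    by (rule measurable_compose[OF fstm hm])
  have fm: "?f \<in> borel_measurable (jps_sample H M n)"
    by (rule borel_measurable_times[OF am borel_measurable_times[OF hfm indm]])
  have gm: "?g \<in> borel_measurable (jps_sample H M n)"
    by (rule borel_measurable_times[OF am indm])
  have fb: "\<And>\<omega>. norm (?f \<omega>) \<le> B"
  proof -
    fix \<omega> have c: "\<bar>h (fst (\<omega> i)) * (if snd (\<omega> i) = r then 1 else 0)\<bar> \<le> 1"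
      using h0 h1 by auto
    have "norm (?f \<omega>) = \<bar>a \<omega>\<bar> * \<bar>h (fst (\<omega> i)) * (if snd (\<omega> i) = r then 1 else 0)\<bar>"
      by (simp add: abs_mult)
    also have "\<dots> \<le> \<bar>a \<omega>\<bar>" by (rule mult_left_le[OF c abs_ge_zero])
    also have "\<dots> \<le> B" by (rule aB)
    finally show "norm (?f \<omega>) \<le> B" .
  qed
  have gb: "\<And>\<omega>. norm (?g \<omega>) \<le> B" using aB by (auto simp: abs_mult intro: order_trans[OF abs_ge_zero aB])
  have fi: "integrable (PiM (insert i I') (\<lambda>_. ?Q)) ?f"
    unfolding Sdef[symmetric] using fm fb by (intro S.integrable_const_bound[where B=B]) auto
  have gi: "integrable (PiM (insert i I') (\<lambda>_. ?Q)) ?g"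
    unfolding Sdef[symmetric] using gm gb by (intro S.integrable_const_bound[where B=B]) auto
  define g where "g = (\<integral>x. h x \<partial>M r)"
  have inner: "(\<integral>y. a (x(i := y)) * (k (fst y) * (if snd y = r then 1 else 0)) \<partial>?Q)
      = a (x(i := (0, r))) * ((\<integral>x. k x \<partial>M r) / real H)"
    if km: "k \<in> borel_measurable borel" and k0: "\<And>x. 0 \<le> k x" and k1: "\<And>x. k x \<le> 1" for x k
  proof -
    have "(\<integral>y. a (x(i := y)) * (k (fst y) * (if snd y = r then 1 else 0)) \<partial>?Q)
        = (\<integral>y. a (x(i := (0, r))) * (k (fst y) * (if snd y = r then 1 else 0)) \<partial>?Q)"
    proof (rule Bochner_Integration.integral_cong[OF refl])
      fix y :: "real \<times> nat"
      show "a (x(i := y)) * (k (fst y) * (if snd y = r then 1 else 0)) = a (x(i := (0, r))) * (k (fst y) * (if snd y = r then 1 else 0))"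
      proof (cases "snd y = r")
        case True
        then have "y = (fst y, r)" by (cases y) auto
        then have "a (x(i := y)) = a (x(i := (0, r)))" using aupd[where \<omega>=x and x="fst y" and x'=0 and s=r] by metis
        then show ?thesis by simp
      qed simp
    qed
    also have "\<dots> = a (x(i := (0, r))) * ((\<integral>x. k x \<partial>M r) / real H)"
      by (simp add: Q_int[OF H M r km k0 k1])
    finally show ?thesis .
  qed
  have "(\<integral>\<omega>. ?f \<omega> \<partial>jps_sample H M n) = (\<integral>x. (\<integral>y. ?f (x(i:=y)) \<partial>?Q) \<partial>PiM I' (\<lambda>_. ?Q))"
    unfolding Sdef by (rule P.product_integral_insert[OF nI(2,3) fi])
  also have "\<dots> = (\<integral>x. a (x(i := (0, r))) * (g / real H) \<partial>PiM I' (\<lambda>_. ?Q))"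
  proof (rule Bochner_Integration.integral_cong[OF refl])
    fix x :: "nat \<Rightarrow> real \<times> nat"
    show "(\<integral>y. ?f (x(i:=y)) \<partial>?Q) = a (x(i := (0, r))) * (g / real H)"
      using inner[OF hm h0 h1, of x] by (simp add: g_def)
  qed
  also have "\<dots> = (\<integral>x. g * (a (x(i := (0, r))) * (1 / real H)) \<partial>PiM I' (\<lambda>_. ?Q))"
    by (intro Bochner_Integration.integral_cong refl) simp
  also have "\<dots> = g * (\<integral>x. a (x(i := (0, r))) * (1 / real H) \<partial>PiM I' (\<lambda>_. ?Q))"
    by (rule integral_mult_right_zero)
  also have "(\<integral>x. a (x(i := (0, r))) * (1 / real H) \<partial>PiM I' (\<lambda>_. ?Q)) = (\<integral>x. (\<integral>y. ?g (x(i:=y)) \<partial>?Q) \<partial>PiM I' (\<lambda>_. ?Q))"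
  proof (rule Bochner_Integration.integral_cong[OF refl])
    fix x :: "nat \<Rightarrow> real \<times> nat"
    have e: "(\<integral>y. a (x(i := y)) * ((\<lambda>_. 1::real) (fst y) * (if snd y = r then 1 else 0)) \<partial>?Q)
      = a (x(i := (0, r))) * ((\<integral>x. (\<lambda>_. 1::real) x \<partial>M r) / real H)"
      by (rule inner) auto
    have "(\<integral>x. (\<lambda>_. 1::real) x \<partial>M r) = 1" using Mr.prob_space by simp
    with e show "a (x(i := (0, r))) * (1 / real H) = (\<integral>y. ?g (x(i:=y)) \<partial>?Q)"
      by simp
  qed
  also have "\<dots> = (\<integral>\<omega>. ?g \<omega> \<partial>jps_sample H M n)"
    unfolding Sdef by (rule P.product_integral_insert[OF nI(2,3) gi, symmetric])
  finally show ?thesis by (simp add: g_def)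
qed


lemma snd_meas:
  assumes H: "H \<ge> 1" and M: "\<forall>r\<in>{1..H}. real_distribution (M r)" and j: "j < n"
  shows "(\<lambda>\<omega>. snd (\<omega> j)) \<in> jps_sample H M n \<rightarrow>\<^sub>M count_space UNIV"
  unfolding jps_sample_def
proof (rule measurable_compose[of "\<lambda>\<omega>. \<omega> j" _ "jps_law H M"])
  show "(\<lambda>\<omega>. \<omega> j) \<in> PiM {..<n} (\<lambda>_. jps_law H M) \<rightarrow>\<^sub>M jps_law H M" using j by simp
  show "snd \<in> jps_law H M \<rightarrow>\<^sub>M count_space UNIV" using measurable_snd[of borel "count_space UNIV"]
    by (simp add: measurable_cong_sets[OF Q_basic(2)[OF H M] refl])
qed

lemma N_real: "real (jps_N n \<omega> r) = (\<Sum>j<n. if snd (\<omega> j) = r then 1 else 0)"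
proof -
  have "jps_N n \<omega> r = (\<Sum>j\<in>{j\<in>{..<n}. snd (\<omega> j) = r}. 1)" unfolding jps_N_def by simp
  also have "\<dots> = (\<Sum>j<n. if snd (\<omega> j) = r then 1 else 0)"
    by (subst sum.inter_filter) auto
  finally have "real (jps_N n \<omega> r) = real (\<Sum>j<n. if snd (\<omega> j) = r then 1 else 0)" by simp
  also have "\<dots> = (\<Sum>j<n. real (if snd (\<omega> j) = r then 1 else 0))" by (rule of_nat_sum)
  also have "\<dots> = (\<Sum>j<n. if snd (\<omega> j) = r then 1 else 0)" by (intro sum.cong) auto
  finally show ?thesis .
qed

lemma d_real: "real (jps_d H n \<omega>) = (\<Sum>s\<in>{1..H}. min 1 (real (jps_N n \<omega> s)))"
proof -
  have "jps_d H n \<omega> = (\<Sum>s\<in>{s\<in>{1..H}. jps_N n \<omega> s > 0}. 1)" unfolding jps_d_def by simp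
  also have "\<dots> = (\<Sum>s\<in>{1..H}. if jps_N n \<omega> s > 0 then 1 else 0)"
    by (subst sum.inter_filter) auto
  finally show ?thesis by (auto intro!: sum.cong)
qed

lemma W_real: "jps_W H n \<omega> r = min 1 (real (jps_N n \<omega> r)) / real (jps_d H n \<omega>)"
  unfolding jps_W_def by auto

lemma N_meas:
  assumes H: "H \<ge> 1" and M: "\<forall>r\<in>{1..H}. real_distribution (M r)"
  shows "(\<lambda>\<omega>. real (jps_N n \<omega> r)) \<in> borel_measurable (jps_sample H M n)"
  unfolding N_real
  by (intro borel_measurable_sum measurable_compose[OF snd_meas[OF H M]]) auto

lemma W_meas:
  assumes H: "H \<ge> 1" and M: "\<forall>r\<in>{1..H}. real_distribution (M r)"
  shows "(\<lambda>\<omega>. jps_W H n \<omega> r) \<in> borel_measurable (jps_sample H M n)"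
    and "(\<lambda>\<omega>. jps_W H n \<omega> r / real (jps_N n \<omega> r)) \<in> borel_measurable (jps_sample H M n)"
proof -
  note [measurable] = N_meas[OF H M]
  show "(\<lambda>\<omega>. jps_W H n \<omega> r) \<in> borel_measurable (jps_sample H M n)"
    unfolding W_real d_real by measurable
  then show "(\<lambda>\<omega>. jps_W H n \<omega> r / real (jps_N n \<omega> r)) \<in> borel_measurable (jps_sample H M n)"
    by measurable
qed

lemma d_pos: "jps_N n \<omega> r > 0 \<Longrightarrow> r \<in> {1..H} \<Longrightarrow> jps_d H n \<omega> \<ge> 1"
proof -
  assume a: "jps_N n \<omega> r > 0" "r \<in> {1..H}"
  have "{s \<in> {1..H}. 0 < jps_N n \<omega> s} \<noteq> {}" using a by auto
  moreover have "finite {s \<in> {1..H}. 0 < jps_N n \<omega> s}" by simp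
  ultimately show ?thesis unfolding jps_d_def
    by (metis Suc_le_eq card_gt_0_iff One_nat_def)
qed

lemma W_bounds: "0 \<le> jps_W H n \<omega> r" "jps_W H n \<omega> r \<le> 1"
  unfolding jps_W_def by (cases "jps_d H n \<omega> = 0"; simp)+

lemma a_bound: "\<bar>jps_W H n \<omega> r / real (jps_N n \<omega> r)\<bar> \<le> 1"
proof (cases "jps_N n \<omega> r > 0")
  case True
  then have "real (jps_N n \<omega> r) \<ge> 1" by simp
  moreover have "0 \<le> jps_W H n \<omega> r" "jps_W H n \<omega> r \<le> 1" by (rule W_bounds)+
  ultimately show ?thesis by (simp add: divide_le_eq_1)
qed (simp add: jps_W_def)

lemma N_upd: "jps_N n (fun_upd \<omega> i (x, s)) r = jps_N n (fun_upd \<omega> i (x', s)) r"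
  unfolding jps_N_def by (simp add: fun_upd_def)

lemma a_upd: "jps_W H n (fun_upd \<omega> i (x, s)) r / real (jps_N n (fun_upd \<omega> i (x, s)) r)
   = jps_W H n (fun_upd \<omega> i (x', s)) r / real (jps_N n (fun_upd \<omega> i (x', s)) r)"
  unfolding jps_W_def jps_d_def using N_upd[of n \<omega> i x s _ x'] by simp


lemma fst_meas:
  assumes H: "H \<ge> 1" and M: "\<forall>r\<in>{1..H}. real_distribution (M r)" and j: "j < n"
  shows "(\<lambda>\<omega>. fst (\<omega> j)) \<in> borel_measurable (jps_sample H M n)"
  unfolding jps_sample_def
proof (rule measurable_compose[of "\<lambda>\<omega>. \<omega> j" _ "jps_law H M"])
  show "(\<lambda>\<omega>. \<omega> j) \<in> PiM {..<n} (\<lambda>_. jps_law H M) \<rightarrow>\<^sub>M jps_law H M" using j by simp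
  show "fst \<in> jps_law H M \<rightarrow>\<^sub>M borel" using measurable_fst[of borel "count_space UNIV"]
    by (simp add: measurable_cong_sets[OF Q_basic(2)[OF H M] refl])
qed

lemma est_expand:
  "jps_est H Kn n \<omega> t = (\<Sum>r\<in>{1..H}. \<Sum>i<n. (jps_W H n \<omega> r / real (jps_N n \<omega> r)) *
      (Kn (t - fst (\<omega> i)) * (if snd (\<omega> i) = r then 1 else 0)))"
  unfolding jps_est_def
proof (rule sum.cong[OF refl])
  fix r
  show "jps_W H n \<omega> r * jps_Fr Kn n \<omega> r t = (\<Sum>i<n. (jps_W H n \<omega> r / real (jps_N n \<omega> r)) *
      (Kn (t - fst (\<omega> i)) * (if snd (\<omega> i) = r then 1 else 0)))"
  proof (cases "jps_N n \<omega> r > 0")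
    case True
    have "(\<Sum>i<n. (jps_W H n \<omega> r / real (jps_N n \<omega> r)) *
      (Kn (t - fst (\<omega> i)) * (if snd (\<omega> i) = r then 1 else 0))) = (jps_W H n \<omega> r / real (jps_N n \<omega> r)) *
      (\<Sum>i<n. Kn (t - fst (\<omega> i)) * (if snd (\<omega> i) = r then 1 else 0))"
      by (rule sum_distrib_left[symmetric])
    then show ?thesis unfolding jps_Fr_def using True by simp
  qed (simp add: jps_W_def)
qed

lemma W_expand:
  "(\<Sum>i<n. (jps_W H n \<omega> r / real (jps_N n \<omega> r)) * (if snd (\<omega> i) = r then 1 else 0)) = jps_W H n \<omega> r"
proof -
  have "(\<Sum>i<n. (jps_W H n \<omega> r / real (jps_N n \<omega> r)) * (if snd (\<omega> i) = r then 1 else 0))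
     = (jps_W H n \<omega> r / real (jps_N n \<omega> r)) * real (jps_N n \<omega> r)"
    by (subst sum_distrib_left[symmetric]) (simp only: N_real)
  also have "\<dots> = jps_W H n \<omega> r"
    by (cases "jps_N n \<omega> r > 0") (auto simp: jps_W_def)
  finally show ?thesis .
qed

lemma mean_formula:
  fixes Kn :: "real \<Rightarrow> real"
  assumes H: "H \<ge> 1" and M: "\<forall>r\<in>{1..H}. real_distribution (M r)"
    and Km: "Kn \<in> borel_measurable borel" and K0: "\<And>x. 0 \<le> Kn x" and K1: "\<And>x. Kn x \<le> 1"
  shows "(\<integral>\<omega>. jps_est H Kn n \<omega> t \<partial>jps_sample H M n)
      = (\<Sum>r\<in>{1..H}. (\<integral>x. Kn (t - x) \<partial>M r) * (\<integral>\<omega>. jps_W H n \<omega> r \<partial>jps_sample H M n))"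
proof -
  interpret S: prob_space "jps_sample H M n" by (rule S_basic(1)[OF H M])
  let ?S = "jps_sample H M n"
  let ?a = "\<lambda>r \<omega>. jps_W H n \<omega> r / real (jps_N n \<omega> r)"
  let ?ind = "\<lambda>r i \<omega>. (if snd (\<omega> i) = r then 1 else 0::real)"
  have hm: "(\<lambda>x. Kn (t - x)) \<in> borel_measurable borel"
    by (rule measurable_compose[OF _ Km]) simp
  have indm: "?ind r i \<in> borel_measurable ?S" if "i < n" for r i
    by (rule measurable_compose[OF snd_meas[OF H M that]]) simp
  have hfm: "(\<lambda>\<omega>. Kn (t - fst (\<omega> i))) \<in> borel_measurable ?S" if "i < n" for i
    by (rule measurable_compose[OF fst_meas[OF H M that] hm])
  have int1: "integrable ?S (\<lambda>\<omega>. ?a r \<omega> * (Kn (t - fst (\<omega> i)) * ?ind r i \<omega>))" if "i < n" for r i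
  proof (rule S.integrable_const_bound[where B=1])
    show "AE \<omega> in ?S. norm (?a r \<omega> * (Kn (t - fst (\<omega> i)) * ?ind r i \<omega>)) \<le> 1"
    proof (rule AE_I2)
      fix \<omega>
      have "\<bar>?a r \<omega>\<bar> \<le> 1" by (rule a_bound)
      moreover have "\<bar>Kn (t - fst (\<omega> i)) * ?ind r i \<omega>\<bar> \<le> 1" using K0 K1 by auto
      ultimately have "\<bar>?a r \<omega>\<bar> * \<bar>Kn (t - fst (\<omega> i)) * ?ind r i \<omega>\<bar> \<le> 1"
        by (intro mult_le_one abs_ge_zero)
      then show "norm (?a r \<omega> * (Kn (t - fst (\<omega> i)) * ?ind r i \<omega>)) \<le> 1"
        by (simp only: real_norm_def abs_mult)
    qed
    show "(\<lambda>\<omega>. ?a r \<omega> * (Kn (t - fst (\<omega> i)) * ?ind r i \<omega>)) \<in> borel_measurable ?S"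
      by (rule borel_measurable_times[OF W_meas(2)[OF H M] borel_measurable_times[OF hfm[OF that] indm[OF that]]])
  qed
  have int2: "integrable ?S (\<lambda>\<omega>. ?a r \<omega> * ?ind r i \<omega>)" if "i < n" for r i
  proof (rule S.integrable_const_bound[where B=1])
    show "AE \<omega> in ?S. norm (?a r \<omega> * ?ind r i \<omega>) \<le> 1"
      using a_bound by (auto simp: abs_mult)
    show "(\<lambda>\<omega>. ?a r \<omega> * ?ind r i \<omega>) \<in> borel_measurable ?S"
      by (rule borel_measurable_times[OF W_meas(2)[OF H M] indm[OF that]])
  qed
  have "(\<integral>\<omega>. jps_est H Kn n \<omega> t \<partial>?S) = (\<integral>\<omega>. (\<Sum>r\<in>{1..H}. \<Sum>i<n. ?a r \<omega> * (Kn (t - fst (\<omega> i)) * ?ind r i \<omega>)) \<partial>?S)"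
    by (simp only: est_expand)
  also have "\<dots> = (\<Sum>r\<in>{1..H}. \<Sum>i<n. (\<integral>\<omega>. ?a r \<omega> * (Kn (t - fst (\<omega> i)) * ?ind r i \<omega>) \<partial>?S))"
  proof -
    have "(\<integral>\<omega>. (\<Sum>r\<in>{1..H}. \<Sum>i<n. ?a r \<omega> * (Kn (t - fst (\<omega> i)) * ?ind r i \<omega>)) \<partial>?S)
       = (\<Sum>r\<in>{1..H}. (\<integral>\<omega>. (\<Sum>i<n. ?a r \<omega> * (Kn (t - fst (\<omega> i)) * ?ind r i \<omega>)) \<partial>?S))"
    proof (rule Bochner_Integration.integral_sum)
      fix r assume "r \<in> {1..H}"
      show "integrable ?S (\<lambda>\<omega>. \<Sum>i<n. ?a r \<omega> * (Kn (t - fst (\<omega> i)) * ?ind r i \<omega>))"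
        by (rule Bochner_Integration.integrable_sum) (rule int1, simp)
    qed
    also have "\<dots> = (\<Sum>r\<in>{1..H}. \<Sum>i<n. (\<integral>\<omega>. ?a r \<omega> * (Kn (t - fst (\<omega> i)) * ?ind r i \<omega>) \<partial>?S))"
    proof (rule sum.cong[OF refl])
      fix r assume "r \<in> {1..H}"
      show "(\<integral>\<omega>. (\<Sum>i<n. ?a r \<omega> * (Kn (t - fst (\<omega> i)) * ?ind r i \<omega>)) \<partial>?S) = (\<Sum>i<n. (\<integral>\<omega>. ?a r \<omega> * (Kn (t - fst (\<omega> i)) * ?ind r i \<omega>) \<partial>?S))"
        by (rule Bochner_Integration.integral_sum) (rule int1, simp)
    qed
    finally show ?thesis .
  qed
  also have "\<dots> = (\<Sum>r\<in>{1..H}. \<Sum>i<n. (\<integral>x. Kn (t - x) \<partial>M r) * (\<integral>\<omega>. ?a r \<omega> * ?ind r i \<omega> \<partial>?S))"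
  proof (intro sum.cong refl)
    fix r i assume r: "r \<in> {1..H}" and i: "i \<in> {..<n}"
    show "(\<integral>\<omega>. ?a r \<omega> * (Kn (t - fst (\<omega> i)) * ?ind r i \<omega>) \<partial>?S) = (\<integral>x. Kn (t - x) \<partial>M r) * (\<integral>\<omega>. ?a r \<omega> * ?ind r i \<omega> \<partial>?S)"
      using i by (intro key_split[OF H M r _ W_meas(2)[OF H M] a_bound a_upd hm K0 K1]) auto
  qed
  also have "\<dots> = (\<Sum>r\<in>{1..H}. (\<integral>x. Kn (t - x) \<partial>M r) * (\<integral>\<omega>. (\<Sum>i<n. ?a r \<omega> * ?ind r i \<omega>) \<partial>?S))"
  proof (intro sum.cong refl)
    fix r assume "r \<in> {1..H}"
    have "(\<integral>\<omega>. (\<Sum>i<n. ?a r \<omega> * ?ind r i \<omega>) \<partial>?S) = (\<Sum>i<n. (\<integral>\<omega>. ?a r \<omega> * ?ind r i \<omega> \<partial>?S))"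
      by (rule Bochner_Integration.integral_sum) (rule int2, simp)
    then show "(\<Sum>i<n. (\<integral>x. Kn (t - x) \<partial>M r) * (\<integral>\<omega>. ?a r \<omega> * ?ind r i \<omega> \<partial>?S)) =
      (\<integral>x. Kn (t - x) \<partial>M r) * (\<integral>\<omega>. (\<Sum>i<n. ?a r \<omega> * ?ind r i \<omega>) \<partial>?S)"
      by (simp add: sum_distrib_left)
  qed
  also have "\<dots> = (\<Sum>r\<in>{1..H}. (\<integral>x. Kn (t - x) \<partial>M r) * (\<integral>\<omega>. jps_W H n \<omega> r \<partial>?S))"
    by (simp only: W_expand)
  finally show ?thesis .
qed


lemma space_Q:
  assumes H: "H \<ge> 1" and M: "\<forall>r\<in>{1..H}. real_distribution (M r)"
  shows "space (jps_law H M) = UNIV"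
  using sets_eq_imp_space_eq[OF Q_basic(2)[OF H M]] by (simp add: space_pair_measure)

lemma space_S:
  assumes H: "H \<ge> 1" and M: "\<forall>r\<in>{1..H}. real_distribution (M r)"
  shows "space (jps_sample H M n) = PiE {..<n} (\<lambda>_. UNIV)"
  unfolding jps_sample_def by (simp add: space_PiM space_Q[OF H M])

lemma prob_N0:
  fixes n s :: nat
  assumes H: "H \<ge> 1" and M: "\<forall>r\<in>{1..H}. real_distribution (M r)" and s: "s \<in> {1..H}"
  defines "A \<equiv> PiE {..<n} (\<lambda>_. {y::real\<times>nat. snd y \<noteq> s})"
  shows "A \<in> sets (jps_sample H M n)" and "measure (jps_sample H M n) A = (1 - 1 / real H) ^ n"
    and "\<And>\<omega>. \<omega> \<in> space (jps_sample H M n) \<Longrightarrow> (\<omega> \<in> A) = (jps_N n \<omega> s = 0)"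
proof -
  let ?Q = "jps_law H M"
  interpret P: product_sigma_finite "\<lambda>_. ?Q" by (rule S_basic(2)[OF H M])
  interpret Q: prob_space ?Q by (rule Q_basic(1)[OF H M])
  interpret Ms: real_distribution "M s" using M s by auto
  have sQ: "sets ?Q = sets (borel \<Otimes>\<^sub>M count_space UNIV)" by (rule Q_basic(2)[OF H M])
  have Bs: "{y::real\<times>nat. snd y \<noteq> s} \<in> sets ?Q"
  proof -
    have "{y::real\<times>nat. snd y \<noteq> s} = UNIV \<times> (UNIV - {s})" by auto
    then show ?thesis unfolding sQ by simp
  qed
  show "A \<in> sets (jps_sample H M n)" unfolding A_def jps_sample_def
    by (rule sets_PiM_I_finite) (use Bs in auto)
  have "measure ?Q {y. snd y = s} = (\<integral>y. (\<lambda>_. 1::real) (fst y) * (if snd y = s then 1 else 0) \<partial>?Q)"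
  proof -
    have e: "{y::real\<times>nat. snd y = s} = space ?Q - {y. snd y \<noteq> s}" by (auto simp: space_Q[OF H M])
    have "(\<integral>y. (\<lambda>_. 1::real) (fst y) * (if snd y = s then 1 else 0) \<partial>?Q) = (\<integral>y. indicator {y. snd y = s} y \<partial>?Q)"
      by (intro Bochner_Integration.integral_cong refl) (auto simp: indicator_def)
    also have "\<dots> = measure ?Q {y. snd y = s}" by (simp add: space_Q[OF H M])
    finally show ?thesis by simp
  qed
  also have "\<dots> = (\<integral>x. (\<lambda>_. 1::real) x \<partial>M s) / real H"
    by (rule Q_int[OF H M s]) auto
  also have "\<dots> = 1 / real H" using Ms.prob_space by simp
  finally have m1: "measure ?Q {y. snd y = s} = 1 / real H" .
  have "measure ?Q {y. snd y \<noteq> s} = 1 - measure ?Q {y. snd y = s}"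
  proof -
    have e: "{y::real\<times>nat. snd y = s} = space ?Q - {y. snd y \<noteq> s}" by (auto simp: space_Q[OF H M])
    show ?thesis unfolding e Q.prob_compl[OF Bs] by simp
  qed
  then have m2: "measure ?Q {y. snd y \<noteq> s} = 1 - 1 / real H" using m1 by simp
  have "emeasure (jps_sample H M n) A = (\<Prod>i\<in>{..<n}. emeasure ?Q {y. snd y \<noteq> s})"
    unfolding A_def jps_sample_def by (rule P.emeasure_PiM) (use Bs in auto)
  also have "\<dots> = (\<Prod>i\<in>{..<n}. ennreal (1 - 1 / real H))"
    using m2 by (simp add: Q.emeasure_eq_measure)
  also have "\<dots> = ennreal ((1 - 1 / real H) ^ n)"
    using H by (simp add: prod_ennreal[symmetric] ennreal_power)
  finally show "measure (jps_sample H M n) A = (1 - 1 / real H) ^ n"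
    using H by (simp add: measure_def)
  fix \<omega> assume "\<omega> \<in> space (jps_sample H M n)"
  then have w: "\<omega> \<in> PiE {..<n} (\<lambda>_. UNIV)" by (simp add: space_S[OF H M])
  have "jps_N n \<omega> s = 0 \<longleftrightarrow> (\<forall>i<n. snd (\<omega> i) \<noteq> s)" unfolding jps_N_def by auto
  then show "(\<omega> \<in> A) = (jps_N n \<omega> s = 0)" using w unfolding A_def by (auto simp: PiE_iff)
qed


lemma abs_bound_int:
  fixes f g :: "'a \<Rightarrow> real"
  assumes "integrable M f" "integrable M g" "\<And>x. x \<in> space M \<Longrightarrow> \<bar>f x\<bar> \<le> g x"
  shows "\<bar>\<integral>x. f x \<partial>M\<bar> \<le> (\<integral>x. g x \<partial>M)"
proof -
  have "\<bar>\<integral>x. f x \<partial>M\<bar> \<le> (\<integral>x. \<bar>f x\<bar> \<partial>M)"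
    using integral_norm_bound[of M f] by simp
  also have "\<dots> \<le> (\<integral>x. g x \<partial>M)"
    using assms by (intro integral_mono) auto
  finally show ?thesis .
qed

lemma d_full: "(\<forall>s\<in>{1..H}. jps_N n \<omega> s > 0) \<Longrightarrow> jps_d H n \<omega> = H"
proof -
  assume a: "\<forall>s\<in>{1..H}. jps_N n \<omega> s > 0"
  then have "{s \<in> {1..H}. 0 < jps_N n \<omega> s} = {1..H}" by auto
  then show ?thesis unfolding jps_d_def by simp
qed

lemma W_limit:
  assumes H: "H \<ge> 1" and M: "\<forall>r\<in>{1..H}. real_distribution (M r)" and r: "r \<in> {1..H}"
  shows "(\<lambda>n. \<integral>\<omega>. jps_W H n \<omega> r \<partial>jps_sample H M n) \<longlonglongrightarrow> 1 / real H"
proof -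
  define A where "A n s = PiE {..<n} (\<lambda>_. {y::real\<times>nat. snd y \<noteq> s})" for n s :: nat
  have bound: "\<bar>(\<integral>\<omega>. jps_W H n \<omega> r \<partial>jps_sample H M n) - 1 / real H\<bar> \<le> real H * (1 - 1 / real H) ^ n" for n
  proof -
    interpret S: prob_space "jps_sample H M n" by (rule S_basic(1)[OF H M])
    let ?S = "jps_sample H M n"
    have Wi: "integrable ?S (\<lambda>\<omega>. jps_W H n \<omega> r)"
      by (rule S.integrable_const_bound[where B=1]) (auto simp: W_bounds W_meas(1)[OF H M] abs_le_iff intro: order_trans[OF _ W_bounds(2)])
    have As: "A n s \<in> sets ?S" "measure ?S (A n s) = (1 - 1 / real H) ^ n"
        "\<And>\<omega>. \<omega> \<in> space ?S \<Longrightarrow> (\<omega> \<in> A n s) = (jps_N n \<omega> s = 0)" if "s \<in> {1..H}" for s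
      using prob_N0[OF H M that, where n=n] unfolding A_def by auto
    have Ai: "integrable ?S (\<lambda>\<omega>. \<Sum>s\<in>{1..H}. indicator (A n s) \<omega> :: real)"
      by (rule Bochner_Integration.integrable_sum) (auto simp: As(1) S.emeasure_eq_measure)
    have "(\<integral>\<omega>. jps_W H n \<omega> r \<partial>?S) - 1 / real H = (\<integral>\<omega>. jps_W H n \<omega> r - 1 / real H \<partial>?S)"
      using Wi by (simp add: S.prob_space)
    also have "\<bar>\<dots>\<bar> \<le> (\<integral>\<omega>. (\<Sum>s\<in>{1..H}. indicator (A n s) \<omega>) \<partial>?S)"
    proof (rule abs_bound_int)
      show "integrable ?S (\<lambda>\<omega>. jps_W H n \<omega> r - 1 / real H)" using Wi by simp
      show "integrable ?S (\<lambda>\<omega>. \<Sum>s\<in>{1..H}. indicator (A n s) \<omega> :: real)" by (rule Ai)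
      fix \<omega> assume w: "\<omega> \<in> space ?S"
      show "\<bar>jps_W H n \<omega> r - 1 / real H\<bar> \<le> (\<Sum>s\<in>{1..H}. indicator (A n s) \<omega>)"
      proof (cases "\<exists>s\<in>{1..H}. jps_N n \<omega> s = 0")
        case True
        then obtain s where s: "s \<in> {1..H}" "jps_N n \<omega> s = 0" by auto
        have "(1::real) = indicator (A n s) \<omega>" using As(3)[OF s(1) w] s by simp
        also have "\<dots> \<le> (\<Sum>s\<in>{1..H}. indicator (A n s) \<omega>)"
          by (rule member_le_sum) (use s in auto)
        finally have "1 \<le> (\<Sum>s\<in>{1..H}. indicator (A n s) \<omega> :: real)" .
        moreover have "\<bar>jps_W H n \<omega> r - 1 / real H\<bar> \<le> 1"
        proof -
          have "0 \<le> 1 / real H" "1 / real H \<le> 1" using H by auto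
          then show ?thesis using W_bounds[of H n \<omega> r] unfolding abs_le_iff by linarith
        qed
        ultimately show ?thesis by linarith
      next
        case False
        then have "\<forall>s\<in>{1..H}. jps_N n \<omega> s > 0" by auto
        moreover from this r have "jps_N n \<omega> r > 0" by auto
        ultimately have "jps_W H n \<omega> r = 1 / real H" unfolding jps_W_def using d_full by auto
        then show ?thesis by (simp add: sum_nonneg)
      qed
    qed
    also have "\<dots> = (\<Sum>s\<in>{1..H}. (\<integral>\<omega>. indicator (A n s) \<omega> \<partial>?S))"
      by (rule Bochner_Integration.integral_sum) (auto simp: As(1) S.emeasure_eq_measure)
    also have "\<dots> = (\<Sum>s\<in>{1..H}. (1 - 1 / real H) ^ n)"
    proof (rule sum.cong[OF refl])
      fix s assume s: "s \<in> {1..H}"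
      have "A n s \<inter> space ?S = A n s" using As(1)[OF s] sets.sets_into_space by blast
      then show "(\<integral>\<omega>. indicator (A n s) \<omega> \<partial>?S) = (1 - 1 / real H) ^ n"
        using As(2)[OF s] by simp
    qed
    also have "\<dots> = real H * (1 - 1 / real H) ^ n" by simp
    finally show ?thesis .
  qed
  have lim: "(\<lambda>n. real H * (1 - 1 / real H) ^ n) \<longlonglongrightarrow> 0"
  proof (rule tendsto_mult_right_zero, rule LIMSEQ_power_zero)
    show "norm (1 - 1 / real H) < 1" using H by (auto simp: field_simps)
  qed
  have "(\<lambda>n. (\<integral>\<omega>. jps_W H n \<omega> r \<partial>jps_sample H M n) - 1 / real H) \<longlonglongrightarrow> 0"
    by (rule Lim_null_comparison[OF _ lim]) (use bound in auto)
  then show ?thesis by (simp add: Lim_null[symmetric])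
qed


lemma cdf_props:
  assumes "is_cdf G"
  shows "G \<in> borel_measurable borel" "\<And>x. 0 \<le> G x" "\<And>x. G x \<le> 1"
proof -
  obtain N where N: "real_distribution N" "cdf N = G" using assms unfolding is_cdf_def by auto
  interpret N: real_distribution N by (rule N(1))
  have "mono G" unfolding N(2)[symmetric] by (auto intro!: monoI N.cdf_nondecreasing)
  then show "G \<in> borel_measurable borel" by (rule borel_measurable_mono)
  show "\<And>x. 0 \<le> G x" unfolding N(2)[symmetric] by (rule N.cdf_nonneg)
  show "\<And>x. G x \<le> 1" unfolding N(2)[symmetric] by (rule N.cdf_bounded_prob)
qed

lemma isCont_e: "y \<noteq> 0 \<Longrightarrow> isCont e_cdf y"
proof -
  assume y: "y \<noteq> 0"
  show ?thesis
  proof (cases "y > 0")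
    case True
    have ev: "eventually (\<lambda>x. x \<in> {0<..}) (nhds y)"
      by (rule eventually_nhds_in_open) (use True in auto)
    have "eventually (\<lambda>x. e_cdf x = 1) (nhds y)"
      by (rule eventually_mono[OF ev]) (auto simp: e_cdf_def)
    then show ?thesis by (subst isCont_cong) auto
  next
    case False
    then have "y < 0" using y by auto
    have ev: "eventually (\<lambda>x. x \<in> {..<0}) (nhds y)"
      by (rule eventually_nhds_in_open) (use \<open>y < 0\<close> in auto)
    have "eventually (\<lambda>x. e_cdf x = 0) (nhds y)"
      by (rule eventually_mono[OF ev]) (auto simp: e_cdf_def)
    then show ?thesis by (subst isCont_cong) auto
  qed
qed

lemma cdf_left_eq:
  assumes "real_distribution N" "cdf N t = measure N {..<t}"
  shows "isCont (cdf N) t"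
proof -
  interpret N: real_distribution N by fact
  have "continuous (at_left t) (cdf N)"
    unfolding continuous_within using N.cdf_at_left[of t] assms(2) by simp
  then show ?thesis using N.cdf_is_right_cont continuous_at_split by blast
qed

lemma atoms_zero:
  assumes H: "H \<ge> 1" and M: "\<forall>r\<in>{1..H}. real_distribution (M r)"
    and F: "\<forall>t. F t = (\<Sum>r\<in>{1..H}. cdf (M r) t) / real H" and c: "isCont F t"
    and r: "r \<in> {1..H}"
  shows "isCont (cdf (M r)) t"
proof -
  have Fe: "F = (\<lambda>t. (\<Sum>r\<in>{1..H}. cdf (M r) t) / real H)" using F by auto
  have l1: "(F \<longlongrightarrow> (\<Sum>r\<in>{1..H}. measure (M r) {..<t}) / real H) (at_left t)"
    unfolding Fe
  proof (intro tendsto_divide tendsto_sum tendsto_const)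
    fix s assume "s \<in> {1..H}"
    then interpret Ms: real_distribution "M s" using M by auto
    show "((\<lambda>x. cdf (M s) x) \<longlongrightarrow> measure (M s) {..<t}) (at_left t)" using Ms.cdf_at_left by simp
  qed (use H in auto)
  have l2: "(F \<longlongrightarrow> F t) (at_left t)"
    by (rule tendsto_within_subset[OF c[unfolded isCont_def]]) simp
  have "F t = (\<Sum>r\<in>{1..H}. measure (M r) {..<t}) / real H"
    using tendsto_unique[OF trivial_limit_at_left_real l2 l1] .
  then have eq: "(\<Sum>r\<in>{1..H}. cdf (M r) t - measure (M r) {..<t}) = 0"
    using F H by (simp add: sum_subtractf)
  have nn: "\<forall>s\<in>{1..H}. 0 \<le> cdf (M s) t - measure (M s) {..<t}"
  proof
    fix s assume s: "s \<in> {1..H}"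
    interpret Ms: real_distribution "M s" using M s by auto
    show "0 \<le> cdf (M s) t - measure (M s) {..<t}"
    proof -
      have "measure (M s) {..<t} \<le> measure (M s) {..t}" by (rule Ms.finite_measure_mono) auto
      then show ?thesis by (simp add: cdf_def)
    qed
  qed
  have "cdf (M r) t - measure (M r) {..<t} = 0"
    using sum_nonneg_eq_0_iff[of "{1..H}" "\<lambda>s. cdf (M s) t - measure (M s) {..<t}"] eq nn r by auto
  then show ?thesis using M r by (intro cdf_left_eq) auto
qed

lemma kernel_conv:
  assumes K: "\<And>n. is_cdf (K n)" and w: "weak_conv K e_cdf"
    and N: "real_distribution N" and c: "isCont (cdf N) t"
  shows "(\<lambda>n. \<integral>x. K n (t - x) \<partial>N) \<longlonglongrightarrow> cdf N t"
proof -
  interpret N: real_distribution N by fact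
  have m0: "measure N {t} = 0" using c N.isCont_cdf by simp
  have Km: "\<And>n. K n \<in> borel_measurable borel" using cdf_props(1)[OF K] .
  have lim: "(\<lambda>n. \<integral>x. K n (t - x) \<partial>N) \<longlonglongrightarrow> (\<integral>x. indicator {..<t} x \<partial>N)"
  proof (rule integral_dominated_convergence[where w="\<lambda>_. 1"])
    show "indicator {..<t} \<in> borel_measurable N" by simp
    show "\<And>n. (\<lambda>x. K n (t - x)) \<in> borel_measurable N"
      using Km by (simp add: measurable_compose[OF _ Km])
    show "integrable N (\<lambda>_. 1::real)" by simp
    show "AE x in N. (\<lambda>n. K n (t - x)) \<longlonglongrightarrow> indicator {..<t} x"
    proof (rule AE_I'[of "{t}"])
      show "{t} \<in> null_sets N" using m0 by (simp add: N.emeasure_eq_measure null_sets_def)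
      show "{x \<in> space N. \<not> (\<lambda>n. K n (t - x)) \<longlonglongrightarrow> indicator {..<t} x} \<subseteq> {t}"
      proof safe
        fix x assume nx: "\<not> (\<lambda>n. K n (t - x)) \<longlonglongrightarrow> indicator {..<t} x"
        show "x = t"
        proof (rule ccontr)
          assume "x \<noteq> t"
          then have "isCont e_cdf (t - x)" by (intro isCont_e) auto
          then have "(\<lambda>n. K n (t - x)) \<longlonglongrightarrow> e_cdf (t - x)" using w unfolding weak_conv_def by auto
          moreover have "e_cdf (t - x) = indicator {..<t} x" using \<open>x \<noteq> t\<close> by (auto simp: e_cdf_def)
          ultimately show False using nx by simp
        qed
      qed
    qed
    show "\<And>n. AE x in N. norm (K n (t - x)) \<le> 1"
      using cdf_props(2,3)[OF K] by (auto simp: abs_le_iff intro: order_trans[OF _ cdf_props(3)[OF K]])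
  qed
  have "(\<integral>x. indicator {..<t} x \<partial>N) = measure N {..<t}" by simp
  also have "\<dots> = cdf N t"
  proof -
    have "{..t} = {..<t} \<union> {t}" by auto
    then have "cdf N t = measure N ({..<t} \<union> {t})" by (simp add: cdf_def)
    also have "\<dots> = measure N {..<t} + measure N {t}"
      by (rule N.finite_measure_Union) auto
    finally show ?thesis using m0 by simp
  qed
  finally show ?thesis using lim by simp
qed


theorem theorem1:
  fixes H :: nat and K :: "nat \<Rightarrow> real \<Rightarrow> real"
  assumes "H \<ge> 2"
    and "\<And>n. is_cdf (K n)"
  shows
    "(weak_conv K e_cdf \<longrightarrow>
        (\<forall>(M :: nat \<Rightarrow> real measure) (F :: real \<Rightarrow> real).
           (\<forall>r\<in>{1..H}. real_distribution (M r)) \<longrightarrow>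
           (\<forall>t. F t = (\<Sum>r\<in>{1..H}. cdf (M r) t) / real H) \<longrightarrow>
           (\<forall>t. isCont F t \<longrightarrow> (\<lambda>n. jps_mean H M K n t) \<longlonglongrightarrow> F t)))
     \<and>
     ((\<forall>(M :: nat \<Rightarrow> real measure) (F :: real \<Rightarrow> real).
           (\<forall>r\<in>{1..H}. real_distribution (M r)) \<longrightarrow>
           (\<forall>t. F t = (\<Sum>r\<in>{1..H}. cdf (M r) t) / real H) \<longrightarrow>
           (\<forall>t. isCont F t \<longrightarrow> (\<lambda>n. jps_mean H M K n t) \<longlonglongrightarrow> F t))
      \<longrightarrow> weak_conv K e_cdf)"
proof (intro conjI impI allI)
  have H: "H \<ge> 1" using assms(1) by simp
  note Kp = cdf_props[OF assms(2)]
  have mean: "jps_mean H M K n t = (\<Sum>r\<in>{1..H}. (\<integral>x. K n (t - x) \<partial>M r) * (\<integral>\<omega>. jps_W H n \<omega> r \<partial>jps_sample H M n))"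
    if M: "\<forall>r\<in>{1..H}. real_distribution (M r)" for M n t
    unfolding jps_mean_def by (rule mean_formula[OF H M Kp])
  {
    fix M :: "nat \<Rightarrow> real measure" and F :: "real \<Rightarrow> real" and t
    assume w: "weak_conv K e_cdf" and M: "\<forall>r\<in>{1..H}. real_distribution (M r)"
      and F: "\<forall>t. F t = (\<Sum>r\<in>{1..H}. cdf (M r) t) / real H" and c: "isCont F t"
    have "(\<lambda>n. \<Sum>r\<in>{1..H}. (\<integral>x. K n (t - x) \<partial>M r) * (\<integral>\<omega>. jps_W H n \<omega> r \<partial>jps_sample H M n))
        \<longlonglongrightarrow> (\<Sum>r\<in>{1..H}. cdf (M r) t * (1 / real H))"
    proof (intro tendsto_sum tendsto_mult)
      fix r assume r: "r \<in> {1..H}"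
      show "(\<lambda>n. \<integral>x. K n (t - x) \<partial>M r) \<longlonglongrightarrow> cdf (M r) t"
        using kernel_conv[OF assms(2) w _ atoms_zero[OF H M F c r]] M r by auto
      show "(\<lambda>n. \<integral>\<omega>. jps_W H n \<omega> r \<partial>jps_sample H M n) \<longlonglongrightarrow> 1 / real H"
        by (rule W_limit[OF H M r])
    qed
    moreover have "(\<Sum>r\<in>{1..H}. cdf (M r) t * (1 / real H)) = F t"
      using F by (simp add: sum_divide_distrib)
    ultimately show "(\<lambda>n. jps_mean H M K n t) \<longlonglongrightarrow> F t"
      using mean[OF M] by simp
  }
  assume hyp: "\<forall>(M :: nat \<Rightarrow> real measure) (F :: real \<Rightarrow> real).
           (\<forall>r\<in>{1..H}. real_distribution (M r)) \<longrightarrow>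
           (\<forall>t. F t = (\<Sum>r\<in>{1..H}. cdf (M r) t) / real H) \<longrightarrow>
           (\<forall>t. isCont F t \<longrightarrow> (\<lambda>n. jps_mean H M K n t) \<longlonglongrightarrow> F t)"
  define Z where "Z = (\<lambda>_::nat. return (borel :: real measure) 0)"
  have RZ: "real_distribution (Z r)" for r
    unfolding Z_def by (rule real_distribution.intro, rule prob_space_return) (auto intro: real_distribution_axioms.intro)
  then have ZM: "\<forall>r\<in>{1..H}. real_distribution (Z r)" by auto
  have cdfZ: "cdf (Z r) t = e_cdf t" for r t
    unfolding Z_def cdf_def e_cdf_def by (simp add: measure_return indicator_def)
  have FZ: "\<forall>t. e_cdf t = (\<Sum>r\<in>{1..H}. cdf (Z r) t) / real H"
    using H by (simp add: cdfZ)
  show "weak_conv K e_cdf" unfolding weak_conv_def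
  proof (intro allI impI)
    fix t assume c: "isCont e_cdf t"
    have l1: "(\<lambda>n. jps_mean H Z K n t) \<longlonglongrightarrow> e_cdf t" using hyp ZM FZ c by blast
    define cn where "cn n = (\<Sum>r\<in>{1..H}. \<integral>\<omega>. jps_W H n \<omega> r \<partial>jps_sample H Z n)" for n
    have l2: "cn \<longlonglongrightarrow> (\<Sum>r\<in>{1..H}. 1 / real H)" unfolding cn_def
      by (intro tendsto_sum W_limit[OF H ZM])
    have "(\<Sum>r\<in>{1..H}. 1 / real H) = (1::real)" using H by simp
    with l2 have l2': "cn \<longlonglongrightarrow> 1" by simp
    have eqm: "jps_mean H Z K n t = K n t * cn n" for n
    proof -
      have "jps_mean H Z K n t = (\<Sum>r\<in>{1..H}. K n t * (\<integral>\<omega>. jps_W H n \<omega> r \<partial>jps_sample H Z n))"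
        unfolding mean[OF ZM]
      proof (intro sum.cong refl)
        fix r
        have "(\<integral>x. K n (t - x) \<partial>Z r) = K n t" unfolding Z_def
          by (subst integral_return) (auto intro: measurable_compose[OF _ Kp(1)])
        then show "(\<integral>x. K n (t - x) \<partial>Z r) * (\<integral>\<omega>. jps_W H n \<omega> r \<partial>jps_sample H Z n) =
            K n t * (\<integral>\<omega>. jps_W H n \<omega> r \<partial>jps_sample H Z n)" by simp
      qed
      then show ?thesis by (simp add: cn_def sum_distrib_left)
    qed
    have "(\<lambda>n. jps_mean H Z K n t / cn n) \<longlonglongrightarrow> e_cdf t / 1"
      by (rule tendsto_divide[OF l1 l2']) simp
    moreover have "eventually (\<lambda>n. jps_mean H Z K n t / cn n = K n t) sequentially"
    proof -
      have "eventually (\<lambda>n. cn n > 0) sequentially"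
        using l2' by (rule order_tendstoD) simp
      then show ?thesis by (rule eventually_mono) (simp add: eqm)
    qed
    ultimately show "(\<lambda>n. K n t) \<longlonglongrightarrow> e_cdf t"
      by (simp add: Lim_transform_eventually)
  qed
qed

end
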